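(* Let $F$ be a field of characteristic zero and $A$ a $\#$-superalgebra over $F$. Let $n_1,n_2,n_3,n_4,m$ be positive integers, $\langle n\rangle=(n_1,n_2,n_3,n_4)$, $i_0\in\{1,2,3,4\}$ with $n_{i_0}\ge m^2$, and $Q=\{q_1,\dots,q_{m^2}\}\subseteq\{1,\dots,n_{i_0}\}$ with $|Q|=m^2$. Let $\rho=\rho_1\otimes\cdots\otimes\rho_4$ where $\rho_{i_0}\in FS_Q$ and $\rho_j\in FS_{n_j}$ for $j\ne i_0$, and let $f\in P_{\langle n\rangle}$ be such that $\rho f\not\equiv0$ in $A$. Let $V_{i_0}$ denote the variables of type $i_0$ (i.e. $y_{0,\cdot}$ if $i_0=1$, $z_{0,\cdot}$ if $i_0=2$, $y_{1,\cdot}$ if $i_0=3$, $z_{1,\cdot}$ if $i_0=4$), and $v_{k}$ the variable of type $i_0$ with second index $k$. Then there exist integers $t_1,t_2,t_3,t_4\ge0$, with $t=t_1+t_2+t_3+t_4$, $t_{i_0}\ge m^2$ and $m^2\le t\le 2m^2+1$, and a multilinear $\#$-supermonomial $w$ whose variables are: for each type $j\ne i_0$, the first $t_j$ variables of type $j$; and, for type $i_0$, a set $X_{t_{i_0}}$ of $t_{i_0}$ variables consisting of $v_{q_1},\dots,v_{q_{m^2}}$ together with $t_{i_0}-m^2$ further variables chosen among $\{v_1,\dots,v_{t_{i_0}}\}\setminus\{v_{q_1},\dots,v_{q_{m^2}}\}$; such that $$(Id_1\otimes\cdots\otimes\rho_{i_0}\otimes\cdots\otimes Id_4)\,w\not\equiv0\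 \text{ in } A,$$ where $\rho_{i_0}$ acts by permuting the indices in $Q$ of the variables $v_{q_1},\dots,v_{q_{m^2}}$ and all other factors act trivially.
   Context: All algebras are associative over $F$. A superalgebra is $A=A_0\oplus A_1$; a superinvolution is an $F$-linear $\#$ with $A_i^\#\subseteq A_i$, $(c^\#)^\#=c$, $(ab)^\#=(-1)^{\deg a\deg b}b^\#a^\#$; a graded involution is $F$-linear $\#$ with $A_i^\#\subseteq A_i$, $(c^\#)^\#=c$, $(ab)^\#=b^\#a^\#$; a $\#$-superalgebra carries one of these; $A_i^\pm=\{a\in A_i:a^\#=\pm a\}$. $\mathcal F$ is the free non-unital associative algebra on variables $y_{i,j}$ (symmetric) and $z_{i,j}$ (skew), $i\in\{0,1\}$, $j\ge1$; the variables $y_{0,j}$, $z_{0,j}$, $y_{1,j}$, $z_{1,j}$ are said to be of type 1, 2, 3, 4 respectively; variables with first index $i$ have $\mathbb Z_2$-degree $i$, and $\mathcal F$ carries the induced superinvolution/graded involution. A $\#$-supermonomial is a monomial of $\mathcal F$. $g\equiv0$ in $A$ means $g$ vanishes under all substitutions $y_{0,j}\mapsto A_0^+$, $z_{0,j}\mapsto A_0^-$, $y_{1,j}\mapsto A_1^+$, $z_{1,j}\mapsto A_1^-$. $P_{\langle n\rangle}$ is the span of monomials multilinear in $y_{0,1..n_1},z_{0,1..n_2},y_{1,1..n_3},z_{1,1..n_4}$; $FS_{n_1}\otimes\cdots\otimes FS_{n_4}$ acts on it by permuting second indices of each type separately, and $S_Q$ denotes the permutations of $\{1,\dots,n_{i_0}\}$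 fixing every point outside $Q$. *)

theory Defs
  imports Main HOL.Modules "HOL-Library.Groups_Big_Fun" "HOL-Combinatorics.Permutations"
begin

definition algebra_over :: "('a::field \<Rightarrow> 'b::ring \<Rightarrow> 'b) \<Rightarrow> bool" where
  "algebra_over sc \<longleftrightarrow> module sc \<and>
     (\<forall>c x y. sc c (x * y) = sc c x * y \<and> sc c (x * y) = x * sc c y)"

definition superalgebra :: "('a::field \<Rightarrow> 'b::ring \<Rightarrow> 'b) \<Rightarrow> (nat \<Rightarrow> 'b set) \<Rightarrow> bool" where
  "superalgebra sc G \<longleftrightarrow> algebra_over sc \<and>
     module.subspace sc (G 0) \<and> module.subspace sc (G 1) \<and>
     G 0 \<inter> G 1 = {0} \<and> (\<forall>x. \<exists>a\<in>G 0. \<exists>b\<in>G 1. x = a + b) \<and>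
     (\<forall>i\<in>{0,1}. \<forall>j\<in>{0,1}. \<forall>a\<in>G i. \<forall>b\<in>G j. a * b \<in> G ((i + j) mod 2))"

definition graded_linear_involutive ::
  "('a::field \<Rightarrow> 'b::ring \<Rightarrow> 'b) \<Rightarrow> (nat \<Rightarrow> 'b set) \<Rightarrow> ('b \<Rightarrow> 'b) \<Rightarrow> bool" where
  "graded_linear_involutive sc G sh \<longleftrightarrow>
     (\<forall>x y. sh (x + y) = sh x + sh y) \<and> (\<forall>c x. sh (sc c x) = sc c (sh x)) \<and>
     (\<forall>i\<in>{0,1}. sh ` G i \<subseteq> G i) \<and> (\<forall>c. sh (sh c) = c)"

definition superinvolution ::
  "('a::field \<Rightarrow> 'b::ring \<Rightarrow> 'b) \<Rightarrow> (nat \<Rightarrow> 'b set) \<Rightarrow> ('b \<Rightarrow> 'b) \<Rightarrow> bool" where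
  "superinvolution sc G sh \<longleftrightarrow> graded_linear_involutive sc G sh \<and>
     (\<forall>i\<in>{0,1}. \<forall>j\<in>{0,1}. \<forall>a\<in>G i. \<forall>b\<in>G j.
        sh (a * b) = (if i = 1 \<and> j = 1 then - (sh b * sh a) else sh b * sh a))"

definition graded_involution ::
  "('a::field \<Rightarrow> 'b::ring \<Rightarrow> 'b) \<Rightarrow> (nat \<Rightarrow> 'b set) \<Rightarrow> ('b \<Rightarrow> 'b) \<Rightarrow> bool" where
  "graded_involution sc G sh \<longleftrightarrow> graded_linear_involutive sc G sh \<and>
     (\<forall>a b. sh (a * b) = sh b * sh a)"

definition sharp_superalgebra ::
  "('a::field \<Rightarrow> 'b::ring \<Rightarrow> 'b) \<Rightarrow> (nat \<Rightarrow> 'b set) \<Rightarrow> ('b \<Rightarrow> 'b) \<Rightarrow> bool" where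
  "sharp_superalgebra sc G sh \<longleftrightarrow> superalgebra sc G \<and>
     (superinvolution sc G sh \<or> graded_involution sc G sh)"

text \<open>A variable is a pair (type, index): type 1,2,3,4 stands for
  y_(0,j), z_(0,j), y_(1,j), z_(1,j) respectively; indices start at 1.
  Monomials are (nonempty) words of variables; a polynomial is its coefficient
  function on words (finitely supported in all uses below).\<close>
type_synonym var = "nat \<times> nat"
type_synonym 'a fpoly = "var list \<Rightarrow> 'a"

text \<open>Product of a nonempty word in a non-unital algebra (the free algebra
  is non-unital, so the empty word never occurs).\<close>
fun wprod :: "'b::ring list \<Rightarrow> 'b" where
  "wprod [] = 0"
| "wprod [x] = x"
| "wprod (x # y # xs) = x * wprod (y # xs)"

definition eval_poly :: "('a \<Rightarrow> 'b \<Rightarrow> 'b) \<Rightarrow> 'a::zero fpoly \<Rightarrow> (var \<Rightarrow> 'b::ring) \<Rightarrow> 'b" where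
  "eval_poly sc p s = Sum_any (\<lambda>w. if p w = 0 then 0 else sc (p w) (wprod (map s w)))"

definition sym_part :: "(nat \<Rightarrow> 'b set) \<Rightarrow> ('b \<Rightarrow> 'b) \<Rightarrow> nat \<Rightarrow> 'b set" where
  "sym_part G sh i = {a \<in> G i. sh a = a}"
definition skew_part :: "(nat \<Rightarrow> 'b set) \<Rightarrow> ('b \<Rightarrow> 'b::ab_group_add) \<Rightarrow> nat \<Rightarrow> 'b set" where
  "skew_part G sh i = {a \<in> G i. sh a = - a}"

definition admissible_subst :: "(nat \<Rightarrow> 'b set) \<Rightarrow> ('b \<Rightarrow> 'b::ab_group_add) \<Rightarrow> (var \<Rightarrow> 'b) \<Rightarrow> bool" where
  "admissible_subst G sh s \<longleftrightarrow> (\<forall>j.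
     s (1, j) \<in> sym_part G sh 0 \<and> s (2, j) \<in> skew_part G sh 0 \<and>
     s (3, j) \<in> sym_part G sh 1 \<and> s (4, j) \<in> skew_part G sh 1)"

definition vanishes_in ::
  "('a::field \<Rightarrow> 'b::ring \<Rightarrow> 'b) \<Rightarrow> (nat \<Rightarrow> 'b set) \<Rightarrow> ('b \<Rightarrow> 'b) \<Rightarrow> 'a fpoly \<Rightarrow> bool" where
  "vanishes_in sc G sh p \<longleftrightarrow> (\<forall>s. admissible_subst G sh s \<longrightarrow> eval_poly sc p s = 0)"

definition monom_poly :: "var list \<Rightarrow> 'a::{zero,one} fpoly" where
  "monom_poly w = (\<lambda>u. if u = w then 1 else 0)"

definition multilinear_in :: "var set \<Rightarrow> var list \<Rightarrow> bool" where
  "multilinear_in S w \<longleftrightarrow> distinct w \<and> set w = S"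

definition vars_n :: "(nat \<Rightarrow> nat) \<Rightarrow> var set" where
  "vars_n n = {(i, j). i \<in> {1..4} \<and> j \<in> {1..n i}}"

definition in_P :: "(nat \<Rightarrow> nat) \<Rightarrow> 'a::zero fpoly \<Rightarrow> bool" where
  "in_P n f \<longleftrightarrow> (\<forall>w. f w \<noteq> 0 \<longrightarrow> multilinear_in (vars_n n) w)"

text \<open>Elements of a group algebra FS: coefficient functions on permutations
  (maps nat \<Rightarrow> nat); the support is constrained separately.\<close>
type_synonym 'a galg = "(nat \<Rightarrow> nat) \<Rightarrow> 'a"

definition galg_unit :: "'a::{zero,one} galg" where
  "galg_unit = (\<lambda>\<sigma>. if \<sigma> = id then 1 else 0)"

definition rename_type :: "nat \<Rightarrow> (nat \<Rightarrow> nat) \<Rightarrow> var \<Rightarrow> var" where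
  "rename_type i \<sigma> v = (if fst v = i then (fst v, \<sigma> (snd v)) else v)"

text \<open>Linear action of r in FS on polynomials, permuting the indices of type-i variables:
  sigma sends the monomial w to map (rename_type i sigma) w (a left action).\<close>
definition act_type :: "nat \<Rightarrow> 'a::comm_ring_1 galg \<Rightarrow> 'a fpoly \<Rightarrow> 'a fpoly" where
  "act_type i r p = (\<lambda>u. Sum_any (\<lambda>\<sigma>. r \<sigma> * p (map (rename_type i (inv \<sigma>)) u)))"

definition tensor_act :: "(nat \<Rightarrow> 'a::comm_ring_1 galg) \<Rightarrow> 'a fpoly \<Rightarrow> 'a fpoly" where
  "tensor_act \<rho> f = act_type 1 (\<rho> 1) (act_type 2 (\<rho> 2) (act_type 3 (\<rho> 3) (act_type 4 (\<rho> 4) f)))"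

end

theory Submission
  imports Defs
begin


definition supp :: "('x \<Rightarrow> 'a::zero) \<Rightarrow> 'x set" where "supp p = {x. p x \<noteq> 0}"

lemma ren_id[simp]: "rename_type i id = id"
  by (auto simp: rename_type_def fun_eq_iff)

lemma ren_comp: "rename_type i \<sigma> (rename_type i \<tau> v) = rename_type i (\<sigma> \<circ> \<tau>) v"
  by (auto simp: rename_type_def)

lemma ren_comm: "i \<noteq> j \<Longrightarrow> rename_type i \<sigma> (rename_type j \<tau> v) = rename_type j \<tau> (rename_type i \<sigma> v)"
  by (auto simp: rename_type_def)

lemma ren_inv1: "bij \<sigma> \<Longrightarrow> rename_type i \<sigma> (rename_type i (inv \<sigma>) v) = v"
  by (auto simp: rename_type_def bij_is_surj surj_f_inv_f)

lemma ren_inv2: "bij \<sigma> \<Longrightarrow> rename_type i (inv \<sigma>) (rename_type i \<sigma> v) = v"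
  by (auto simp: rename_type_def bij_is_inj inv_f_f)

lemma map_ren_inv1: "bij \<sigma> \<Longrightarrow> map (rename_type i \<sigma>) (map (rename_type i (inv \<sigma>)) u) = u"
  by (induct u) (auto simp: ren_inv1)

lemma map_ren_inv2: "bij \<sigma> \<Longrightarrow> map (rename_type i (inv \<sigma>)) (map (rename_type i \<sigma>) u) = u"
  by (induct u) (auto simp: ren_inv2)

lemma act_sum:
  assumes "finite (supp r)"
  shows "act_type i r p u = (\<Sum>\<sigma>\<in>supp r. r \<sigma> * p (map (rename_type i (inv \<sigma>)) u))"
  unfolding act_type_def
  by (rule Sum_any.expand_superset) (use assms in \<open>auto simp: supp_def\<close>)

lemma act_comm:
  assumes "i \<noteq> j" "finite (supp r)" "finite (supp r')"
  shows "act_type i r (act_type j r' p) = act_type j r' (act_type i r p)"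
proof
  fix u
  have "act_type i r (act_type j r' p) u =
     (\<Sum>\<sigma>\<in>supp r. \<Sum>\<tau>\<in>supp r'. r \<sigma> * (r' \<tau> * p (map (rename_type j (inv \<tau>)) (map (rename_type i (inv \<sigma>)) u))))"
    by (simp add: act_sum assms sum_distrib_left)
  also have "\<dots> = (\<Sum>\<tau>\<in>supp r'. \<Sum>\<sigma>\<in>supp r. r' \<tau> * (r \<sigma> * p (map (rename_type i (inv \<sigma>)) (map (rename_type j (inv \<tau>)) u))))"
  proof (subst sum.swap, intro sum.cong refl)
    fix \<tau> \<sigma>
    have "map (rename_type j (inv \<tau>) \<circ> rename_type i (inv \<sigma>)) u = map (rename_type i (inv \<sigma>) \<circ> rename_type j (inv \<tau>)) u"
      by (rule map_cong) (simp_all add: ren_comm[OF assms(1)])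
    show "r \<sigma> * (r' \<tau> * p (map (rename_type j (inv \<tau>)) (map (rename_type i (inv \<sigma>)) u))) =
          r' \<tau> * (r \<sigma> * p (map (rename_type i (inv \<sigma>)) (map (rename_type j (inv \<tau>)) u)))"
      unfolding map_map \<open>map (rename_type j (inv \<tau>) \<circ> rename_type i (inv \<sigma>)) u = _\<close> by (simp add: mult.left_commute)
  qed
  also have "\<dots> = act_type j r' (act_type i r p) u"
    by (simp add: act_sum assms sum_distrib_left)
  finally show "act_type i r (act_type j r' p) u = act_type j r' (act_type i r p) u" .
qed

lemma act_unit: "act_type j galg_unit p = p"
proof
  fix u
  have "act_type j galg_unit p u = (\<Sum>\<sigma>. if \<sigma> = id then p (map (rename_type j (inv \<sigma>)) u) else 0)"
    unfolding act_type_def galg_unit_def by (rule Sum_any.cong) auto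
  also have "\<dots> = p u" by (simp add: inv_id)
  finally show "act_type j galg_unit p u = p u" .
qed

definition goodr :: "'a::zero galg \<Rightarrow> bool" where
  "goodr r \<longleftrightarrow> finite (supp r) \<and> (\<forall>\<sigma>\<in>supp r. bij \<sigma>)"

lemma fin_act:
  assumes "goodr r" "finite (supp p)"
  shows "finite (supp (act_type i r p))"
proof -
  have "supp (act_type i r p) \<subseteq> (\<Union>\<sigma>\<in>supp r. map (rename_type i \<sigma>) ` supp p)"
  proof
    fix u assume "u \<in> supp (act_type i r p)"
    then have "(\<Sum>\<sigma>\<in>supp r. r \<sigma> * p (map (rename_type i (inv \<sigma>)) u)) \<noteq> 0"
      using assms by (auto simp: act_sum goodr_def supp_def[of "act_type i r p"])
    then obtain \<sigma> where s: "\<sigma> \<in> supp r" and "r \<sigma> * p (map (rename_type i (inv \<sigma>)) u) \<noteq> 0"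
      using sum.not_neutral_contains_not_neutral by blast
    then have "p (map (rename_type i (inv \<sigma>)) u) \<noteq> 0" by auto
    then have "map (rename_type i (inv \<sigma>)) u \<in> supp p" by (simp add: supp_def)
    moreover have "u = map (rename_type i \<sigma>) (map (rename_type i (inv \<sigma>)) u)"
      using s assms map_ren_inv1[of \<sigma> i u] by (simp only: goodr_def)
    ultimately show "u \<in> (\<Union>\<sigma>\<in>supp r. map (rename_type i \<sigma>) ` supp p)" using s by blast
  qed
  moreover have "finite (\<Union>\<sigma>\<in>supp r. map (rename_type i \<sigma>) ` supp p)"
    using assms by (auto simp: goodr_def)
  ultimately show ?thesis by (rule finite_subset)
qed



lemma eval_sum:
  assumes "module sc" "finite W" "supp p \<subseteq> W"
  shows "eval_poly sc p s = (\<Sum>w\<in>W. sc (p w) (wprod (map s w)))"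
proof -
  have "eval_poly sc p s = (\<Sum>w\<in>W. if p w = 0 then 0 else sc (p w) (wprod (map s w)))"
    unfolding eval_poly_def
    by (rule Sum_any.expand_superset) (use assms in \<open>auto simp: supp_def\<close>)
  also have "\<dots> = (\<Sum>w\<in>W. sc (p w) (wprod (map s w)))"
    by (rule sum.cong) (auto simp: module.scale_zero_left[OF assms(1)])
  finally show ?thesis .
qed

lemma supp_act_sub:
  assumes "goodr r"
  shows "supp (act_type i r p) \<subseteq> (\<Union>\<sigma>\<in>supp r. map (rename_type i \<sigma>) ` supp p)"
proof
  fix u assume "u \<in> supp (act_type i r p)"
  then have "(\<Sum>\<sigma>\<in>supp r. r \<sigma> * p (map (rename_type i (inv \<sigma>)) u)) \<noteq> 0"
    using assms by (auto simp: act_sum goodr_def supp_def[of "act_type i r p"])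
  then obtain \<sigma> where s: "\<sigma> \<in> supp r" and "r \<sigma> * p (map (rename_type i (inv \<sigma>)) u) \<noteq> 0"
    using sum.not_neutral_contains_not_neutral by blast
  then have "p (map (rename_type i (inv \<sigma>)) u) \<noteq> 0" by auto
  then have "map (rename_type i (inv \<sigma>)) u \<in> supp p" by (simp add: supp_def)
  moreover have "u = map (rename_type i \<sigma>) (map (rename_type i (inv \<sigma>)) u)"
    using s assms map_ren_inv1[of \<sigma> i u] by (simp only: goodr_def)
  ultimately show "u \<in> (\<Union>\<sigma>\<in>supp r. map (rename_type i \<sigma>) ` supp p)" using s by blast
qed

lemma eval_act:
  fixes sc :: "'a::comm_ring_1 \<Rightarrow> 'b::ring \<Rightarrow> 'b"
  assumes m: "module sc" and g: "goodr r" and fp: "finite (supp p)"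
  shows "eval_poly sc (act_type i r p) s = (\<Sum>\<sigma>\<in>supp r. sc (r \<sigma>) (eval_poly sc p (s \<circ> rename_type i \<sigma>)))"
proof -
  define U where "U = (\<Union>\<sigma>\<in>supp r. map (rename_type i \<sigma>) ` supp p)"
  have fU: "finite U" using g fp by (auto simp: U_def goodr_def)
  have fr: "finite (supp r)" using g by (simp add: goodr_def)
  define P where "P = (\<lambda>(s::var \<Rightarrow> 'b) w. wprod (map s w))"
  have "eval_poly sc (act_type i r p) s = (\<Sum>u\<in>U. sc (act_type i r p u) (P s u))"
    unfolding P_def by (rule eval_sum[OF m fU]) (use supp_act_sub[OF g] in \<open>simp add: U_def\<close>)
  also have "\<dots> = (\<Sum>u\<in>U. \<Sum>\<sigma>\<in>supp r. sc (r \<sigma>) (sc (p (map (rename_type i (inv \<sigma>)) u)) (P s u)))"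
    by (simp add: act_sum fr module.scale_sum_left[OF m] module.scale_scale[OF m])
  also have "\<dots> = (\<Sum>\<sigma>\<in>supp r. sc (r \<sigma>) (\<Sum>u\<in>U. sc (p (map (rename_type i (inv \<sigma>)) u)) (P s u)))"
    by (subst sum.swap) (simp add: module.scale_sum_right[OF m])
  also have "\<dots> = (\<Sum>\<sigma>\<in>supp r. sc (r \<sigma>) (eval_poly sc p (s \<circ> rename_type i \<sigma>)))"
  proof (rule sum.cong[OF refl])
    fix \<sigma> assume s: "\<sigma> \<in> supp r"
    then have b: "bij \<sigma>" using g by (simp add: goodr_def)
    define F where "F = (\<lambda>u. sc (p (map (rename_type i (inv \<sigma>)) u)) (P s u))"
    have inj: "inj_on (map (rename_type i \<sigma>)) (supp p)"
      by (rule inj_on_inverseI[where g="map (rename_type i (inv \<sigma>))"]) (rule map_ren_inv2[OF b])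
    have "eval_poly sc p (s \<circ> rename_type i \<sigma>) = (\<Sum>w\<in>supp p. sc (p w) (wprod (map (s \<circ> rename_type i \<sigma>) w)))"
      by (rule eval_sum[OF m fp]) simp
    also have "\<dots> = (\<Sum>w\<in>supp p. F (map (rename_type i \<sigma>) w))"
      unfolding F_def P_def using map_ren_inv2[OF b] by (simp only: map_map)
    also have "\<dots> = (\<Sum>u\<in>map (rename_type i \<sigma>) ` supp p. F u)"
      using sum.reindex[OF inj, of F] by (simp add: comp_def)
    also have "\<dots> = (\<Sum>u\<in>U. F u)"
    proof (rule sum.mono_neutral_left[OF fU])
      show "map (rename_type i \<sigma>) ` supp p \<subseteq> U" using s by (auto simp: U_def)
      show "\<forall>u\<in>U - map (rename_type i \<sigma>) ` supp p. F u = 0"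
      proof
        fix u assume u: "u \<in> U - map (rename_type i \<sigma>) ` supp p"
        have "p (map (rename_type i (inv \<sigma>)) u) = 0"
        proof (rule ccontr)
          assume "p (map (rename_type i (inv \<sigma>)) u) \<noteq> 0"
          then have "map (rename_type i (inv \<sigma>)) u \<in> supp p" by (simp add: supp_def)
          then have "map (rename_type i \<sigma>) (map (rename_type i (inv \<sigma>)) u) \<in> map (rename_type i \<sigma>) ` supp p" by blast
          then show False using u map_ren_inv1[OF b, of i u] by simp
        qed
        then show "F u = 0" by (simp add: F_def module.scale_zero_left[OF m])
      qed
    qed
    finally show "sc (r \<sigma>) (\<Sum>u\<in>U. sc (p (map (rename_type i (inv \<sigma>)) u)) (P s u)) =
       sc (r \<sigma>) (eval_poly sc p (s \<circ> rename_type i \<sigma>))" by (simp add: F_def)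
  qed
  finally show ?thesis .
qed

lemma adm_ren:
  assumes "admissible_subst G sh s"
  shows "admissible_subst G sh (s \<circ> rename_type i \<sigma>)"
  using assms unfolding admissible_subst_def by (auto simp: rename_type_def)

lemma peel:
  assumes m: "module sc" and g: "goodr r" and fp: "finite (supp p)"
    and nz: "\<not> vanishes_in sc G sh (act_type i r p)"
  shows "\<not> vanishes_in sc G sh p"
proof -
  obtain s where s: "admissible_subst G sh s" and e: "eval_poly sc (act_type i r p) s \<noteq> 0"
    using nz by (auto simp: vanishes_in_def)
  then have "(\<Sum>\<sigma>\<in>supp r. sc (r \<sigma>) (eval_poly sc p (s \<circ> rename_type i \<sigma>))) \<noteq> 0"
    by (simp add: eval_act[OF m g fp])
  then obtain \<sigma> where "sc (r \<sigma>) (eval_poly sc p (s \<circ> rename_type i \<sigma>)) \<noteq> 0"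
    using sum.not_neutral_contains_not_neutral by blast
  then have "eval_poly sc p (s \<circ> rename_type i \<sigma>) \<noteq> 0" by (auto simp: module.scale_zero_right[OF m])
  then show ?thesis using adm_ren[OF s] by (auto simp: vanishes_in_def)
qed

lemma eval_monom:
  assumes m: "module sc"
  shows "eval_poly sc (monom_poly w) s = wprod (map s w)"
  by (subst eval_sum[OF m, of "{w}"]) (auto simp: supp_def monom_poly_def module.scale_one[OF m])



lemma pick_monom:
  fixes sc :: "'a::field \<Rightarrow> 'b::ring \<Rightarrow> 'b"
  assumes m: "module sc" and g: "goodr r" and ff: "finite (supp f)"
    and nz: "\<not> vanishes_in sc G sh (act_type i r f)"
  shows "\<exists>w s. f w \<noteq> 0 \<and> admissible_subst G sh s \<and>
     (\<Sum>\<sigma>\<in>supp r. sc (r \<sigma>) (wprod (map (s \<circ> rename_type i \<sigma>) w))) \<noteq> 0"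
proof -
  obtain s where s: "admissible_subst G sh s" and e: "eval_poly sc (act_type i r f) s \<noteq> 0"
    using nz by (auto simp: vanishes_in_def)
  have "eval_poly sc (act_type i r f) s =
     (\<Sum>\<sigma>\<in>supp r. sc (r \<sigma>) (\<Sum>w\<in>supp f. sc (f w) (wprod (map (s \<circ> rename_type i \<sigma>) w))))"
    by (simp add: eval_act[OF m g ff] eval_sum[OF m ff])
  also have "\<dots> = (\<Sum>w\<in>supp f. sc (f w) (\<Sum>\<sigma>\<in>supp r. sc (r \<sigma>) (wprod (map (s \<circ> rename_type i \<sigma>) w))))"
    by (simp add: module.scale_sum_right[OF m] module.scale_scale[OF m] mult.commute sum.swap[of _ "supp f"])
  finally have "(\<Sum>w\<in>supp f. sc (f w) (\<Sum>\<sigma>\<in>supp r. sc (r \<sigma>) (wprod (map (s \<circ> rename_type i \<sigma>) w)))) \<noteq> 0"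
    using e by simp
  then obtain w where w: "w \<in> supp f" and "sc (f w) (\<Sum>\<sigma>\<in>supp r. sc (r \<sigma>) (wprod (map (s \<circ> rename_type i \<sigma>) w))) \<noteq> 0"
    using sum.not_neutral_contains_not_neutral by blast
  then have "(\<Sum>\<sigma>\<in>supp r. sc (r \<sigma>) (wprod (map (s \<circ> rename_type i \<sigma>) w))) \<noteq> 0"
    by (auto simp: module.scale_zero_right[OF m])
  then show ?thesis using w s by (auto simp: supp_def)
qed

lemma wprod_Cons: "l \<noteq> [] \<Longrightarrow> wprod (a # l) = a * wprod l"
  by (cases l) auto

lemma wprod_assoc2: "wprod (xs @ x # y # ys) = wprod (xs @ (x * y) # ys)"
proof (induct xs)
  case Nil then show ?case by (cases ys) (auto simp: mult.assoc)
next
  case (Cons a xs) then show ?case by (simp add: wprod_Cons)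
qed

lemma wprod_lin: "wprod (xs @ (a + c) # ys) = wprod (xs @ a # ys) + wprod (xs @ c # ys)"
proof (induct xs)
  case Nil then show ?case by (cases ys) (auto simp: distrib_right)
next
  case (Cons x xs) then show ?case by (simp add: wprod_Cons distrib_left)
qed

datatype 'b slot = QV nat | CV nat 'b

fun sv :: "(var \<Rightarrow> 'b) \<Rightarrow> nat \<Rightarrow> (nat \<Rightarrow> nat) \<Rightarrow> 'b slot \<Rightarrow> 'b" where
  "sv s i0 \<sigma> (QV q) = s (i0, \<sigma> q)"
| "sv s i0 \<sigma> (CV j b) = b"

fun qvs :: "'b slot list \<Rightarrow> nat list" where
  "qvs [] = []"
| "qvs (QV q # xs) = q # qvs xs"
| "qvs (CV j b # xs) = qvs xs"

lemma qvs_append[simp]: "qvs (xs @ ys) = qvs xs @ qvs ys"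
  by (induct xs rule: qvs.induct) auto

fun noadj :: "'b slot list \<Rightarrow> bool" where
  "noadj [] = True"
| "noadj (QV q # xs) = noadj xs"
| "noadj (CV j b # xs) = (case xs of CV _ _ # _ \<Rightarrow> False | _ \<Rightarrow> noadj xs)"

lemma noadj_len: "noadj sl \<Longrightarrow> length sl \<le> 2 * length (qvs sl) + 1"
proof (induction sl rule: length_induct)
  case (1 sl)
  show ?case
  proof (cases sl)
    case Nil then show ?thesis by simp
  next
    case (Cons x xs)
    note sl = this
    show ?thesis
    proof (cases x)
      case (QV q) with 1 Cons show ?thesis by auto
    next
      case (CV j b)
      show ?thesis
      proof (cases xs)
        case Nil with CV Cons show ?thesis by simp
      next
        case (Cons y ys)
        note Cons2 = this
        show ?thesis
        proof (cases y)
          case (CV j' b') with 1 sl Cons2 \<open>x = CV j b\<close> show ?thesis by simp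
        next
          case (QV q)
          have "noadj ys" using 1 sl Cons2 QV \<open>x = CV j b\<close> by simp
          then have "length ys \<le> 2 * length (qvs ys) + 1" using 1 sl Cons2 by auto
          then show ?thesis using sl Cons2 QV \<open>x = CV j b\<close> by simp
        qed
      qed
    qed
  qed
qed

lemma not_noadj: "\<not> noadj sl \<Longrightarrow> \<exists>xs j1 b1 j2 b2 ys. sl = xs @ CV j1 b1 # CV j2 b2 # ys"
proof (induct sl)
  case Nil then show ?case by simp
next
  case (Cons x xs)
  show ?case
  proof (cases "\<exists>j1 b1 j2 b2 ys. x # xs = CV j1 b1 # CV j2 b2 # ys")
    case True then show ?thesis by (metis append_Nil)
  next
    case False
    then have "\<not> noadj xs" using Cons.prems
      by (cases x; cases xs; auto split: slot.splits)
    then obtain as j1 b1 j2 b2 ys where "xs = as @ CV j1 b1 # CV j2 b2 # ys"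
      using Cons.hyps by blast
    then show ?thesis by (metis append_Cons)
  qed
qed



locale SA = module sc for sc :: "'a::field_char_0 \<Rightarrow> 'b::ring \<Rightarrow> 'b" +
  fixes G :: "nat \<Rightarrow> 'b set" and sh :: "'b \<Rightarrow> 'b"
  assumes sub0: "subspace (G 0)" and sub1: "subspace (G 1)"
  and mulG: "\<forall>i\<in>{0,1}. \<forall>j\<in>{0,1}. \<forall>a\<in>G i. \<forall>b\<in>G j. a * b \<in> G ((i + j) mod 2)"
  and sh_add: "\<forall>x y. sh (x + y) = sh x + sh y" and sh_sc: "\<forall>c x. sh (sc c x) = sc c (sh x)"
  and sh_G: "\<forall>i\<in>{0,1}. sh ` G i \<subseteq> G i" and sh_sh: "\<forall>c. sh (sh c) = c"
begin

definition part :: "nat \<Rightarrow> 'b set" where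
  "part j = (if j = 1 then sym_part G sh 0 else if j = 2 then skew_part G sh 0
     else if j = 3 then sym_part G sh 1 else skew_part G sh 1)"

definition deg :: "nat \<Rightarrow> nat" where "deg j = (if j = 1 \<or> j = 2 then 0 else 1)"

lemma four: "j \<in> {1..4::nat} \<Longrightarrow> j = 1 \<or> j = 2 \<or> j = 3 \<or> j = 4" by auto

lemma adm_iff: "admissible_subst G sh s \<longleftrightarrow> (\<forall>j\<in>{1..4}. \<forall>k. s (j, k) \<in> part j)"
proof
  assume A: "admissible_subst G sh s"
  show "\<forall>j\<in>{1..4}. \<forall>k. s (j, k) \<in> part j"
  proof (intro ballI allI)
    fix j k assume "j \<in> {1..4::nat}"
    then show "s (j, k) \<in> part j" using four A unfolding admissible_subst_def part_def by fastforce
  qed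
next
  assume "\<forall>j\<in>{1..4}. \<forall>k. s (j, k) \<in> part j"
  then have "\<forall>k. s (1, k) \<in> part 1 \<and> s (2, k) \<in> part 2 \<and> s (3, k) \<in> part 3 \<and> s (4, k) \<in> part 4"
    by auto
  then show "admissible_subst G sh s"
    unfolding admissible_subst_def part_def by simp
qed

lemma part_G: "b \<in> part j \<Longrightarrow> b \<in> G (deg j)"
  by (auto simp: part_def deg_def sym_part_def skew_part_def split: if_splits)

lemma deg01: "deg j \<in> {0,1}" by (simp add: deg_def)

interpretation shA: additive sh by standard (use sh_add in auto)

lemma subG: "d \<in> {0,1} \<Longrightarrow> subspace (G d)" using sub0 sub1 by auto

lemma decomp:
  assumes d: "d \<in> {0,1}" and x: "x \<in> G d"
  shows "\<exists>a c. x = a + c \<and> a \<in> sym_part G sh d \<and> c \<in> skew_part G sh d"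
proof -
  define a where "a = sc (1/2) (x + sh x)"
  define c where "c = sc (1/2) (x - sh x)"
  have shx: "sh x \<in> G d" using sh_G d x by blast
  have "a + c = sc (1/2) (x + x)"
    by (simp add: a_def c_def scale_right_distrib[symmetric])
  also have "x + x = sc 2 x"
    using scale_left_distrib[of 1 1 x] by simp
  finally have ac: "x = a + c" by simp
  have "a \<in> G d" unfolding a_def using subG[OF d] x shx subspace_add subspace_scale by blast
  moreover have "sh a = a" unfolding a_def using sh_sc sh_sh sh_add by (simp add: add.commute)
  moreover have "c \<in> G d" unfolding c_def using subG[OF d] x shx subspace_diff subspace_scale by blast
  moreover have "sh c = - c" unfolding c_def using sh_sc sh_sh
    by (simp add: shA.diff scale_right_diff_distrib)
  ultimately show ?thesis using ac by (auto simp: sym_part_def skew_part_def)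
qed

lemma contract:
  assumes "j1 \<in> {1..4}" "j2 \<in> {1..4}" "b1 \<in> part j1" "b2 \<in> part j2"
  shows "\<exists>ja jc a c. ja \<in> {1..4} \<and> jc \<in> {1..4} \<and> a \<in> part ja \<and> c \<in> part jc \<and> b1 * b2 = a + c"
proof -
  define d where "d = (deg j1 + deg j2) mod 2"
  have d: "d \<in> {0,1}" by (auto simp: d_def)
  have "b1 * b2 \<in> G d" using mulG part_G assms deg01 unfolding d_def by blast
  then obtain a c where "b1 * b2 = a + c" "a \<in> sym_part G sh d" "c \<in> skew_part G sh d"
    using decomp[OF d] by blast
  moreover have "a \<in> part (if d = 0 then 1 else 3)" "c \<in> part (if d = 0 then 2 else 4)"
    using calculation d by (auto simp: part_def)
  moreover have "(if d = 0 then 1 else 3) \<in> {1..4::nat}" "(if d = 0 then 2 else 4) \<in> {1..4::nat}" by auto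
  ultimately show ?thesis by blast
qed

definition V :: "nat \<Rightarrow> 'a galg \<Rightarrow> (var \<Rightarrow> 'b) \<Rightarrow> 'b slot list \<Rightarrow> 'b" where
  "V i0 r s sl = (\<Sum>\<sigma>\<in>supp r. sc (r \<sigma>) (wprod (map (sv s i0 \<sigma>) sl)))"

lemma V_assoc: "V i0 r s (xs @ CV j1 b1 # CV j2 b2 # ys) = V i0 r s (xs @ CV j (b1 * b2) # ys)"
  unfolding V_def by (simp add: wprod_assoc2)

lemma V_lin: "V i0 r s (xs @ CV j (a + c) # ys) = V i0 r s (xs @ CV ja a # ys) + V i0 r s (xs @ CV jc c # ys)"
  unfolding V_def by (simp add: wprod_lin scale_right_distrib sum.distrib)

fun okslot :: "nat set \<Rightarrow> 'b slot \<Rightarrow> bool" where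
  "okslot Q (QV q) = (q \<in> Q)"
| "okslot Q (CV j b) = (j \<in> {1..4} \<and> b \<in> part j)"

lemma reduce:
  "\<forall>x\<in>set sl. okslot Q x \<Longrightarrow> V i0 r s sl \<noteq> 0 \<Longrightarrow>
   \<exists>sl'. (\<forall>x\<in>set sl'. okslot Q x) \<and> qvs sl' = qvs sl \<and> V i0 r s sl' \<noteq> 0 \<and> noadj sl'"
proof (induction sl rule: length_induct)
  case (1 sl)
  show ?case
  proof (cases "noadj sl")
    case True with 1 show ?thesis by blast
  next
    case False
    then obtain xs j1 b1 j2 b2 ys where sl: "sl = xs @ CV j1 b1 # CV j2 b2 # ys"
      using not_noadj by blast
    have ok: "j1 \<in> {1..4}" "j2 \<in> {1..4}" "b1 \<in> part j1" "b2 \<in> part j2"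
      using 1(2) sl by auto
    obtain ja jc a c where ac: "ja \<in> {1..4}" "jc \<in> {1..4}" "a \<in> part ja" "c \<in> part jc" "b1 * b2 = a + c"
      using contract[OF ok] by blast
    have "V i0 r s sl = V i0 r s (xs @ CV ja (a + c) # ys)"
      using sl V_assoc[of i0 r s xs j1 b1 j2 b2 ys ja] ac(5) by simp
    also have "\<dots> = V i0 r s (xs @ CV ja a # ys) + V i0 r s (xs @ CV jc c # ys)"
      by (rule V_lin)
    finally have sum: "V i0 r s (xs @ CV ja a # ys) + V i0 r s (xs @ CV jc c # ys) \<noteq> 0"
      using 1(3) by simp
    obtain sl1 where sl1: "sl1 = xs @ CV ja a # ys \<or> sl1 = xs @ CV jc c # ys" and nz: "V i0 r s sl1 \<noteq> 0"
    proof (cases "V i0 r s (xs @ CV ja a # ys) = 0")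
      case True
      then have "V i0 r s (xs @ CV jc c # ys) \<noteq> 0" using sum by simp
      then show ?thesis using that by blast
    next
      case False then show ?thesis using that by blast
    qed
    have len: "length sl1 < length sl" using sl1 sl by auto
    have ok1: "\<forall>x\<in>set sl1. okslot Q x" using sl1 1(2) sl ac by auto
    have q1: "qvs sl1 = qvs sl" using sl1 sl by auto
    obtain sl' where "(\<forall>x\<in>set sl'. okslot Q x) \<and> qvs sl' = qvs sl1 \<and> V i0 r s sl' \<noteq> 0 \<and> noadj sl'"
      using 1(1) len ok1 nz by blast
    then show ?thesis using q1 by auto
  qed
qed

end

lemma SA_from:
  assumes "sharp_superalgebra sc G sh"
  shows "SA sc G sh"
  using assms unfolding sharp_superalgebra_def superalgebra_def algebra_over_def superinvolution_def
    graded_involution_def graded_linear_involutive_def SA_def SA_axioms_def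
  by auto



fun cntj :: "nat \<Rightarrow> 'b slot list \<Rightarrow> nat" where
  "cntj j [] = 0"
| "cntj j (QV q # xs) = cntj j xs"
| "cntj j (CV j' b # xs) = (if j' = j then Suc (cntj j xs) else cntj j xs)"

fun nm :: "(nat \<Rightarrow> nat \<Rightarrow> nat) \<Rightarrow> nat \<Rightarrow> (nat \<Rightarrow> nat) \<Rightarrow> 'b slot list \<Rightarrow> var list" where
  "nm e i0 c [] = []"
| "nm e i0 c (QV q # xs) = (i0, q) # nm e i0 c xs"
| "nm e i0 c (CV j b # xs) = (j, e j (Suc (c j))) # nm e i0 (c(j := Suc (c j))) xs"

lemma nm_len[simp]: "length (nm e i0 c xs) = length xs"
  by (induct xs arbitrary: c rule: qvs.induct) auto

definition nmrel :: "(nat \<Rightarrow> nat \<Rightarrow> nat) \<Rightarrow> nat \<Rightarrow> var \<Rightarrow> 'b slot \<Rightarrow> bool" where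
  "nmrel e i0 v x = (case x of QV q \<Rightarrow> v = (i0, q) | CV j b \<Rightarrow> (\<exists>k>0. v = (j, e j k)))"

lemma nm_rel: "list_all2 (nmrel e i0) (nm e i0 c xs) xs"
  by (induct xs arbitrary: c rule: qvs.induct) (auto simp: nmrel_def)

lemma nm_set: "set (nm e i0 c xs) = (\<lambda>q. (i0, q)) ` set (qvs xs) \<union>
    {(j, e j k) | j k. c j < k \<and> k \<le> c j + cntj j xs}"
proof (induct xs arbitrary: c rule: qvs.induct)
  case 1 then show ?case by auto
next
  case (2 q xs) then show ?case by auto
next
  case (3 j b xs)
  have "{(j', e j' k) | j' k. (c(j := Suc (c j))) j' < k \<and> k \<le> (c(j := Suc (c j))) j' + cntj j' xs}
     \<union> {(j, e j (Suc (c j)))} = {(j', e j' k) | j' k. c j' < k \<and> k \<le> c j' + cntj j' (CV j b # xs)}"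
  proof (intro equalityI subsetI)
    fix v assume "v \<in> {(j', e j' k) | j' k. (c(j := Suc (c j))) j' < k \<and> k \<le> (c(j := Suc (c j))) j' + cntj j' xs}
     \<union> {(j, e j (Suc (c j)))}"
    then show "v \<in> {(j', e j' k) | j' k. c j' < k \<and> k \<le> c j' + cntj j' (CV j b # xs)}"
      by (auto split: if_splits) (metis Suc_lessD add_Suc_right)+
  next
    fix v assume "v \<in> {(j', e j' k) | j' k. c j' < k \<and> k \<le> c j' + cntj j' (CV j b # xs)}"
    then obtain j' k where v: "v = (j', e j' k)" "c j' < k" "k \<le> c j' + cntj j' (CV j b # xs)" by blast
    show "v \<in> {(j', e j' k) | j' k. (c(j := Suc (c j))) j' < k \<and> k \<le> (c(j := Suc (c j))) j' + cntj j' xs}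
     \<union> {(j, e j (Suc (c j)))}"
    proof (cases "j' = j")
      case True
      show ?thesis
      proof (cases "k = Suc (c j)")
        case True with v \<open>j' = j\<close> show ?thesis by simp
      next
        case False
        then have "Suc (c j) < k" "k \<le> Suc (c j) + cntj j xs" using v \<open>j' = j\<close> by auto
        then show ?thesis using v \<open>j' = j\<close> by auto
      qed
    next
      case False with v show ?thesis by auto
    qed
  qed
  note E = this
  have IH: "set (nm e i0 (c(j := Suc (c j))) xs) = (\<lambda>q. (i0, q)) ` set (qvs xs) \<union>
    {(j', e j' k) | j' k. (c(j := Suc (c j))) j' < k \<and> k \<le> (c(j := Suc (c j))) j' + cntj j' xs}"
    by (rule 3)
  show ?case unfolding nm.simps qvs.simps list.set IH E[symmetric] by blast
qed

lemma nm_distinct: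
  assumes "\<forall>j. inj_on (e j) {0<..}" "\<forall>k>0. e i0 k \<notin> set (qvs xs)" "distinct (qvs xs)"
  shows "distinct (nm e i0 c xs)"
  using assms
proof (induct xs arbitrary: c rule: qvs.induct)
  case 1 then show ?case by simp
next
  case (2 q xs c)
  have "(i0, q) \<notin> set (nm e i0 c xs)"
  proof
    assume "(i0, q) \<in> set (nm e i0 c xs)"
    then consider "q \<in> set (qvs xs)" | k where "c i0 < k" "q = e i0 k"
      by (auto simp: nm_set)
    then show False
    proof cases
      case 1 then show False using 2(4) by simp
    next
      case 2
      then have "k > 0" by simp
      then have "e i0 k \<notin> set (qvs (QV q # xs))" using \<open>\<forall>k>0. e i0 k \<notin> set (qvs (QV q # xs))\<close> by blast
      then show False using 2 by simp
    qed
  qed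
  then show ?case using 2 by auto
next
  case (3 j b xs c)
  have "(j, e j (Suc (c j))) \<notin> set (nm e i0 (c(j := Suc (c j))) xs)"
  proof
    assume "(j, e j (Suc (c j))) \<in> set (nm e i0 (c(j := Suc (c j))) xs)"
    then consider q where "q \<in> set (qvs xs)" "(j, e j (Suc (c j))) = (i0, q)"
      | k where "Suc (c j) < k" "e j (Suc (c j)) = e j k"
      by (auto simp: nm_set)
    then show False
    proof cases
      case 1 then show False using 3(3) by auto
    next
      case 2
      then have "Suc (c j) = k" using 3(2) unfolding inj_on_def by auto
      then show False using 2 by simp
    qed
  qed
  then show ?case using 3 by auto
qed



context SA
begin

lemma len_cnt: "\<forall>x\<in>set sl. okslot Q x \<Longrightarrow>
   length sl = length (qvs sl) + (cntj 1 sl + cntj 2 sl + cntj 3 sl + cntj 4 sl)"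
proof (induct sl rule: qvs.induct)
  case (3 j b xs)
  then have "j = 1 \<or> j = 2 \<or> j = 3 \<or> j = 4" using four by auto
  then show ?case using 3 by auto
qed auto

lemma cnt_out: "\<forall>x\<in>set sl. okslot Q x \<Longrightarrow> j \<notin> {1..4} \<Longrightarrow> cntj j sl = 0"
  by (induct sl rule: qvs.induct) auto

lemma finalize:
  fixes Q :: "nat set" and M2 N0 :: nat
  assumes ok: "\<forall>x\<in>set sl. okslot Q x" and dq: "distinct (qvs sl)" and sq: "set (qvs sl) = Q"
    and QN: "Q \<subseteq> {1..N0}" and cQ: "card Q = M2" and i0: "i0 \<in> {1..4}"
    and nz: "V i0 r s sl \<noteq> 0" and adm: "admissible_subst G sh s"
    and rp: "\<forall>\<sigma>\<in>supp r. \<sigma> permutes Q"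
  shows "\<exists>t S w s'. t i0 \<ge> M2 \<and> (\<Sum>i\<in>{1..4}. t i) = length sl \<and> S \<subseteq> {1..t i0} - Q \<and> card S = t i0 - M2 \<and>
     multilinear_in ({(j, k). j \<in> {1..4} \<and> j \<noteq> i0 \<and> k \<in> {1..t j}} \<union> {(i0, k) | k. k \<in> Q \<union> S}) w \<and>
     admissible_subst G sh s' \<and> (\<Sum>\<sigma>\<in>supp r. sc (r \<sigma>) (wprod (map (s' \<circ> rename_type i0 \<sigma>) w))) \<noteq> 0"
proof -
  have fQ: "finite Q" using QN finite_subset by blast
  define c0 where "c0 = cntj i0 sl"
  define t where "t = (\<lambda>j. if j = i0 then M2 + c0 else cntj j sl)"
  have lq: "length (qvs sl) = M2" using dq sq cQ distinct_card by fastforce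
  have tsum: "(\<Sum>i\<in>{1..4}. t i) = length sl"
  proof -
    have "t = (\<lambda>j. cntj j sl + (if j = i0 then M2 else 0))" by (auto simp: t_def c0_def fun_eq_iff)
    then have "(\<Sum>i\<in>{1..4}. t i) = (\<Sum>i\<in>{1..4}. cntj i sl) + M2"
      using i0 by (simp add: sum.distrib)
    moreover have s4: "{1..4::nat} = {1,2,3,4}" by auto
    ultimately show ?thesis using len_cnt[OF ok] lq by simp
  qed
  have "card {1..M2 + c0} - card Q \<le> card ({1..M2 + c0} - Q)"
    by (rule diff_card_le_card_Diff[OF fQ])
  then have "c0 \<le> card ({1..M2 + c0} - Q)" using cQ by simp
  then obtain S where S: "S \<subseteq> {1..M2 + c0} - Q" "card S = c0"
    using obtain_subset_with_card_n by metis
  have fS: "finite S" using S(1) finite_subset by blast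
  obtain h where h: "bij_betw h {1..c0} S"
    using finite_same_card_bij[of "{1..c0}" S] fS S(2) by auto
  define B where "B = M2 + c0 + N0"
  define e0 where "e0 = (\<lambda>k. if k \<le> c0 then h k else B + k)"
  define e where "e = (\<lambda>j k. if j = i0 then e0 k else k)"
  have hS: "\<And>k. 0 < k \<Longrightarrow> k \<le> c0 \<Longrightarrow> h k \<in> S" using h by (auto simp: bij_betw_def)
  have Sle: "\<And>x. x \<in> S \<Longrightarrow> x \<le> M2 + c0" using S(1) by auto
  have inj: "\<forall>j. inj_on (e j) {0<..}"
  proof
    fix j
    show "inj_on (e j) {0<..}"
    proof (cases "j = i0")
      case False then show ?thesis by (simp add: e_def inj_on_def)
    next
      case True
      show ?thesis unfolding inj_on_def
      proof (intro ballI impI)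
        fix x y :: nat assume x: "x \<in> {0<..}" and y: "y \<in> {0<..}" and exy: "e j x = e j y"
        show "x = y"
        proof (cases "x \<le> c0"; cases "y \<le> c0")
          assume a: "x \<le> c0" "y \<le> c0"
          then have "h x = h y" using exy True by (simp add: e_def e0_def)
          moreover have "x \<in> {1..c0}" "y \<in> {1..c0}" using a x y by auto
          ultimately show "x = y" using h unfolding bij_betw_def inj_on_def by blast
        next
          assume a: "x \<le> c0" "\<not> y \<le> c0"
          then have "h x = B + y" using exy True by (simp add: e_def e0_def)
          moreover have "h x \<le> M2 + c0" using hS[of x] Sle[of "h x"] x a by simp
          ultimately show "x = y" using y by (simp add: B_def)
        next
          assume a: "\<not> x \<le> c0" "y \<le> c0"
          then have "B + x = h y" using exy True by (simp add: e_def e0_def)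
          moreover have "h y \<le> M2 + c0" using hS[of y] Sle[of "h y"] y a by simp
          ultimately show "x = y" using x by (simp add: B_def)
        next
          assume "\<not> x \<le> c0" "\<not> y \<le> c0"
          then show "x = y" using exy True by (simp add: e_def e0_def)
        qed
      qed
    qed
  qed
  have eQ: "\<And>k. 0 < k \<Longrightarrow> e i0 k \<notin> Q"
  proof -
    fix k :: nat assume k: "0 < k"
    show "e i0 k \<notin> Q"
    proof (cases "k \<le> c0")
      case True
      have "h k \<in> S" using hS k True by blast
      then have "h k \<notin> Q" using S(1) by blast
      then show ?thesis by (simp add: e_def e0_def True)
    next
      case False
      have "e i0 k = B + k" by (simp add: e_def e0_def False)
      moreover have "B + k > N0" using k by (simp add: B_def)
      ultimately show ?thesis using QN by auto
    qed
  qed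
  define w where "w = nm e i0 (\<lambda>_. 0) sl"
  have dw: "distinct w" unfolding w_def
    by (rule nm_distinct[OF inj]) (use eQ sq dq in auto)
  have lw: "length w = length sl" by (simp add: w_def)
  have rel: "list_all2 (nmrel e i0) w sl" unfolding w_def by (rule nm_rel)
  have setw: "set w = {(j, k). j \<in> {1..4} \<and> j \<noteq> i0 \<and> k \<in> {1..t j}} \<union> {(i0, k) | k. k \<in> Q \<union> S}"
  proof -
    have sw: "set w = (\<lambda>q. (i0, q)) ` Q \<union> {(j, e j k) | j k. 0 < k \<and> k \<le> cntj j sl}"
      unfolding w_def nm_set sq by simp
    show ?thesis
    proof (intro equalityI subsetI)
      fix v assume "v \<in> set w"
      then consider q where "q \<in> Q" "v = (i0, q)" | j k where "0 < k" "k \<le> cntj j sl" "v = (j, e j k)"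
        unfolding sw by blast
      then show "v \<in> {(j, k). j \<in> {1..4} \<and> j \<noteq> i0 \<and> k \<in> {1..t j}} \<union> {(i0, k) | k. k \<in> Q \<union> S}"
      proof cases
        case 1 then show ?thesis by auto
      next
        case 2
        show ?thesis
        proof (cases "j = i0")
          case True
          then have "e j k \<in> S" using hS[of k] 2 by (auto simp: e_def e0_def c0_def)
          then show ?thesis using 2 True by auto
        next
          case False
          then have "j \<in> {1..4}" using cnt_out[OF ok, of j] 2 by auto
          then show ?thesis using 2 False by (auto simp: e_def t_def)
        qed
      qed
    next
      fix v assume v: "v \<in> {(j, k). j \<in> {1..4} \<and> j \<noteq> i0 \<and> k \<in> {1..t j}} \<union> {(i0, k) | k. k \<in> Q \<union> S}"
      then consider j k where "j \<noteq> i0" "0 < k" "k \<le> cntj j sl" "v = (j, k)"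
        | q where "q \<in> Q" "v = (i0, q)" | x where "x \<in> S" "v = (i0, x)"
        by (auto simp: t_def)
      then show "v \<in> set w"
      proof cases
        case 1 then have "v = (j, e j k)" by (simp add: e_def)
        then show ?thesis using 1 unfolding sw by blast
      next
        case 2 then show ?thesis unfolding sw by blast
      next
        case 3
        then obtain k where k: "k \<in> {1..c0}" "x = h k" using h by (auto simp: bij_betw_def)
        then have "x = e i0 k" by (simp add: e_def e0_def)
        then show ?thesis using 3 k unfolding sw c0_def by auto
      qed
    qed
  qed
  define s' where "s' = (\<lambda>v. if fst v = i0 \<and> snd v \<in> Q then s v else
      (case map_of (zip w sl) v of Some (CV j b) \<Rightarrow> b | _ \<Rightarrow> s v))"
  have adm': "admissible_subst G sh s'"
    unfolding adm_iff
  proof (intro ballI allI)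
    fix j k assume j: "j \<in> {1..4::nat}"
    have sj: "s (j, k) \<in> part j" using adm j by (simp add: adm_iff)
    show "s' (j, k) \<in> part j"
    proof (cases "j = i0 \<and> k \<in> Q")
      case True then show ?thesis using sj by (simp add: s'_def)
    next
      case False
      show ?thesis
      proof (cases "map_of (zip w sl) (j, k)")
        case None then show ?thesis using False sj unfolding s'_def by auto
      next
        case (Some x)
        show ?thesis
        proof (cases x)
          case (QV q) then show ?thesis using False sj Some unfolding s'_def by auto
        next
          case (CV j' b)
          have mem: "((j, k), CV j' b) \<in> set (zip w sl)" using Some CV map_of_SomeD by fastforce
          then have "nmrel e i0 (j, k) (CV j' b)" using rel by (auto simp: list_all2_iff)
          then have jj: "j' = j" by (auto simp: nmrel_def)
          have "CV j' b \<in> set sl" using mem set_zip_rightD by fastforce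
          then have "b \<in> part j'" using ok by auto
          then show ?thesis using False Some CV jj unfolding s'_def by auto
        qed
      qed
    qed
  qed
  have eqmap: "map (s' \<circ> rename_type i0 \<sigma>) w = map (sv s i0 \<sigma>) sl" if sig: "\<sigma> \<in> supp r" for \<sigma>
  proof (rule nth_equalityI)
    show "length (map (s' \<circ> rename_type i0 \<sigma>) w) = length (map (sv s i0 \<sigma>) sl)" using lw by simp
  next
    fix p assume "p < length (map (s' \<circ> rename_type i0 \<sigma>) w)"
    then have p: "p < length sl" "p < length w" using lw by auto
    have perm: "\<sigma> permutes Q" using rp sig by blast
    have R: "nmrel e i0 (w ! p) (sl ! p)" using list_all2_nthD[OF rel p(2)] .
    have okp: "okslot Q (sl ! p)" using ok p(1) nth_mem by blast
    show "map (s' \<circ> rename_type i0 \<sigma>) w ! p = map (sv s i0 \<sigma>) sl ! p"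
    proof (cases "sl ! p")
      case (QV q)
      then have wp: "w ! p = (i0, q)" using R by (simp add: nmrel_def)
      have "q \<in> Q" using okp QV by simp
      then have "\<sigma> q \<in> Q" using permutes_in_image[OF perm] by simp
      then show ?thesis using p QV wp by (simp add: rename_type_def s'_def)
    next
      case (CV j b)
      then obtain k where k: "k > 0" "w ! p = (j, e j k)" using R by (auto simp: nmrel_def)
      have mo: "map_of (zip w sl) (w ! p) = Some (sl ! p)"
        by (rule map_of_zip_nth[OF lw dw p(1)])
      have nq: "\<not> (j = i0 \<and> e j k \<in> Q)" using eQ[OF k(1)] by auto
      have ren: "rename_type i0 \<sigma> (j, e j k) = (j, e j k)"
        using nq permutes_not_in[OF perm] by (auto simp: rename_type_def)
      have "s' (j, e j k) = b" using mo k CV nq unfolding s'_def by auto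
      then show ?thesis using p CV k ren by simp
    qed
  qed
  have "(\<Sum>\<sigma>\<in>supp r. sc (r \<sigma>) (wprod (map (s' \<circ> rename_type i0 \<sigma>) w))) = V i0 r s sl"
    unfolding V_def by (rule sum.cong) (simp_all add: eqmap)
  then have nz': "(\<Sum>\<sigma>\<in>supp r. sc (r \<sigma>) (wprod (map (s' \<circ> rename_type i0 \<sigma>) w))) \<noteq> 0" using nz by simp
  have "t i0 \<ge> M2" "S \<subseteq> {1..t i0} - Q" "card S = t i0 - M2" using S by (auto simp: t_def)
  moreover have "multilinear_in ({(j, k). j \<in> {1..4} \<and> j \<noteq> i0 \<and> k \<in> {1..t j}} \<union> {(i0, k) | k. k \<in> Q \<union> S}) w"
    using dw setw by (simp add: multilinear_in_def)
  ultimately show ?thesis using tsum adm' nz' by blast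
qed

end


lemma peel3:
  fixes sc :: "'a::field \<Rightarrow> 'b::ring \<Rightarrow> 'b"
  assumes m: "module sc" and g: "goodr ra" "goodr rb" "goodr rc" "goodr r0" and ff: "finite (supp f)"
    and nz: "\<not> vanishes_in sc G sh (act_type a ra (act_type b rb (act_type c rc (act_type i r0 f))))"
  shows "\<not> vanishes_in sc G sh (act_type i r0 f)"
proof -
  have f1: "finite (supp (act_type i r0 f))" by (rule fin_act[OF g(4) ff])
  have f2: "finite (supp (act_type c rc (act_type i r0 f)))" by (rule fin_act[OF g(3) f1])
  have f3: "finite (supp (act_type b rb (act_type c rc (act_type i r0 f))))" by (rule fin_act[OF g(2) f2])
  show ?thesis using peel[OF m g(3) f1 peel[OF m g(2) f2 peel[OF m g(1) f3 nz]]] .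
qed

lemma finite_supp_monom: "finite (supp (monom_poly w :: 'a::{zero,one} fpoly))"
proof -
  have "supp (monom_poly w :: 'a fpoly) \<subseteq> {w}" by (auto simp: supp_def monom_poly_def)
  then show ?thesis using finite_subset by blast
qed

definition mk1 :: "nat \<Rightarrow> nat set \<Rightarrow> (var \<Rightarrow> 'b) \<Rightarrow> var \<Rightarrow> 'b slot" where
  "mk1 i0 Q s v = (if fst v = i0 \<and> snd v \<in> Q then QV (snd v) else CV (fst v) (s v))"

lemma qvs_mk: "qvs (map (mk1 i0 Q s) w) = map snd (filter (\<lambda>v. fst v = i0 \<and> snd v \<in> Q) w)"
  by (induct w) (auto simp: mk1_def)

lemma qvs_len: "length (qvs sl) \<le> length sl"
  by (induct sl rule: qvs.induct) auto

lemma map_sv_mk: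
  assumes "\<sigma> permutes Q"
  shows "map (sv s i0 \<sigma>) (map (mk1 i0 Q s) w) = map (s \<circ> rename_type i0 \<sigma>) w"
  using assms by (induct w) (auto simp: rename_type_def permutes_not_in mk1_def)



theorem proposition4p1:
  fixes sc :: "'a::field_char_0 \<Rightarrow> 'b::ring \<Rightarrow> 'b"
    and G :: "nat \<Rightarrow> 'b set" and sh :: "'b \<Rightarrow> 'b"
    and n :: "nat \<Rightarrow> nat" and m i0 :: nat and Q :: "nat set"
    and \<rho> :: "nat \<Rightarrow> 'a galg" and f :: "'a fpoly"
  assumes A: "sharp_superalgebra sc G sh"
    and n_pos: "\<forall>i\<in>{1..4}. n i > 0" and m_pos: "m > 0"
    and i0: "i0 \<in> {1..4}" and n_i0: "n i0 \<ge> m^2"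
    and Q: "Q \<subseteq> {1..n i0}" "card Q = m^2"
    and rho_i0: "\<forall>\<sigma>. \<rho> i0 \<sigma> \<noteq> 0 \<longrightarrow> \<sigma> permutes Q"
    and rho_j: "\<forall>j\<in>{1..4}. j \<noteq> i0 \<longrightarrow> (\<forall>\<sigma>. \<rho> j \<sigma> \<noteq> 0 \<longrightarrow> \<sigma> permutes {1..n j})"
    and f: "in_P n f"
    and nz: "\<not> vanishes_in sc G sh (tensor_act \<rho> f)"
  shows "\<exists>t :: nat \<Rightarrow> nat. \<exists>S :: nat set. \<exists>w :: var list.
     t i0 \<ge> m^2 \<and> m^2 \<le> (\<Sum>i\<in>{1..4}. t i) \<and> (\<Sum>i\<in>{1..4}. t i) \<le> 2 * m^2 + 1 \<and>
     S \<subseteq> {1..t i0} - Q \<and> card S = t i0 - m^2 \<and>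
     multilinear_in ({(j, k). j \<in> {1..4} \<and> j \<noteq> i0 \<and> k \<in> {1..t j}} \<union> {(i0, k) | k. k \<in> Q \<union> S}) w \<and>
     \<not> vanishes_in sc G sh
         (tensor_act (\<lambda>j. if j = i0 then \<rho> i0 else galg_unit) (monom_poly w))"
proof -
  interpret SA sc G sh by (rule SA_from[OF A])
  have m: "module sc" using SA_from[OF A] by (simp add: SA_def)
  have fQ: "finite Q" using Q(2) m_pos card_ge_0_finite by force
  define r where "r = \<rho> i0"
  have g: "goodr (\<rho> j)" if j: "j \<in> {1..4}" for j
  proof (cases "j = i0")
    case True
    have "supp (\<rho> j) \<subseteq> {\<sigma>. \<sigma> permutes Q}" using rho_i0 True by (auto simp: supp_def)
    moreover have "finite {\<sigma>. \<sigma> permutes Q}" using finite_permutations[OF fQ] .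
    ultimately show ?thesis unfolding goodr_def using permutes_bij finite_subset by blast
  next
    case False
    have "supp (\<rho> j) \<subseteq> {\<sigma>. \<sigma> permutes {1..n j}}" using rho_j j False by (auto simp: supp_def)
    moreover have "finite {\<sigma>. \<sigma> permutes {1..n j}}" using finite_permutations[of "{1..n j}"] by simp
    ultimately show ?thesis unfolding goodr_def using permutes_bij finite_subset by blast
  qed
  have g1: "goodr (\<rho> 1)" and g2: "goodr (\<rho> 2)" and g3: "goodr (\<rho> 3)" and g4: "goodr (\<rho> 4)"
    using g by auto
  have fr: "finite (supp (\<rho> j))" if "j \<in> {1..4}" for j using g[OF that] by (simp add: goodr_def)
  have fr1: "finite (supp (\<rho> 1))" and fr2: "finite (supp (\<rho> 2))" and fr3: "finite (supp (\<rho> 3))"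
    and fr4: "finite (supp (\<rho> 4))" using fr by auto
  have fV: "finite (vars_n n)"
  proof -
    have "vars_n n \<subseteq> {1..4} \<times> {1..n 1 + n 2 + n 3 + n 4}"
    proof
      fix v assume "v \<in> vars_n n"
      then obtain i k where v: "v = (i, k)" "i \<in> {1..4}" "k \<in> {1..n i}" by (auto simp: vars_n_def)
      then have "i = 1 \<or> i = 2 \<or> i = 3 \<or> i = 4" by auto
      then show "v \<in> {1..4} \<times> {1..n 1 + n 2 + n 3 + n 4}" using v by auto
    qed
    then show ?thesis using finite_subset by blast
  qed
  have ff: "finite (supp f)"
  proof -
    have "supp f \<subseteq> {w. set w \<subseteq> vars_n n \<and> length w \<le> card (vars_n n)}"
    proof
      fix w assume "w \<in> supp f"
      then have "multilinear_in (vars_n n) w" using f by (auto simp: in_P_def supp_def)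
      then show "w \<in> {w. set w \<subseteq> vars_n n \<and> length w \<le> card (vars_n n)}"
        by (auto simp: multilinear_in_def distinct_card[symmetric])
    qed
    then show ?thesis using finite_lists_length_le[OF fV] finite_subset by blast
  qed
  have cc: "act_type i (\<rho> i) (act_type j (\<rho> j) p) = act_type j (\<rho> j) (act_type i (\<rho> i) p)"
    if "i \<in> {1..4}" "j \<in> {1..4}" "i \<noteq> j" for i j p
    by (rule act_comm) (use that fr in auto)
  have c12: "\<And>p. act_type 1 (\<rho> 1) (act_type 2 (\<rho> 2) p) = act_type 2 (\<rho> 2) (act_type 1 (\<rho> 1) p)"
    and c13: "\<And>p. act_type 1 (\<rho> 1) (act_type 3 (\<rho> 3) p) = act_type 3 (\<rho> 3) (act_type 1 (\<rho> 1) p)"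
    and c14: "\<And>p. act_type 1 (\<rho> 1) (act_type 4 (\<rho> 4) p) = act_type 4 (\<rho> 4) (act_type 1 (\<rho> 1) p)"
    and c23: "\<And>p. act_type 2 (\<rho> 2) (act_type 3 (\<rho> 3) p) = act_type 3 (\<rho> 3) (act_type 2 (\<rho> 2) p)"
    and c24: "\<And>p. act_type 2 (\<rho> 2) (act_type 4 (\<rho> 4) p) = act_type 4 (\<rho> 4) (act_type 2 (\<rho> 2) p)"
    and c34: "\<And>p. act_type 3 (\<rho> 3) (act_type 4 (\<rho> 4) p) = act_type 4 (\<rho> 4) (act_type 3 (\<rho> 3) p)"
    by (rule cc; simp)+
  have nz0: "\<not> vanishes_in sc G sh (act_type i0 r f)"
  proof -
    consider "i0 = 1" | "i0 = 2" | "i0 = 3" | "i0 = 4" using four[OF i0] by blast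
    then show ?thesis
    proof cases
      case 1
      have "tensor_act \<rho> f = act_type 2 (\<rho> 2) (act_type 3 (\<rho> 3) (act_type 4 (\<rho> 4) (act_type 1 (\<rho> 1) f)))"
        unfolding tensor_act_def c12 c13 c14 ..
      then show ?thesis using peel3[OF m g2 g3 g4 g1 ff] nz 1 by (simp add: r_def)
    next
      case 2
      have "tensor_act \<rho> f = act_type 1 (\<rho> 1) (act_type 3 (\<rho> 3) (act_type 4 (\<rho> 4) (act_type 2 (\<rho> 2) f)))"
        unfolding tensor_act_def c23 c24 ..
      then show ?thesis using peel3[OF m g1 g3 g4 g2 ff] nz 2 by (simp add: r_def)
    next
      case 3
      have "tensor_act \<rho> f = act_type 1 (\<rho> 1) (act_type 2 (\<rho> 2) (act_type 4 (\<rho> 4) (act_type 3 (\<rho> 3) f)))"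
        unfolding tensor_act_def c34 ..
      then show ?thesis using peel3[OF m g1 g2 g4 g3 ff] nz 3 by (simp add: r_def)
    next
      case 4
      have "tensor_act \<rho> f = act_type 1 (\<rho> 1) (act_type 2 (\<rho> 2) (act_type 3 (\<rho> 3) (act_type 4 (\<rho> 4) f)))"
        unfolding tensor_act_def by simp
      then show ?thesis using peel3[OF m g1 g2 g3 g4 ff] nz 4 by (simp add: r_def)
    qed
  qed
  have gr: "goodr r" using g i0 by (simp add: r_def)
  obtain w s where fw: "f w \<noteq> 0" and adm: "admissible_subst G sh s"
    and E: "(\<Sum>\<sigma>\<in>supp r. sc (r \<sigma>) (wprod (map (s \<circ> rename_type i0 \<sigma>) w))) \<noteq> 0"
    using pick_monom[OF m gr ff nz0] by blast
  have mw: "distinct w" "set w = vars_n n" using f fw by (auto simp: in_P_def multilinear_in_def)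
  have rp: "\<forall>\<sigma>\<in>supp r. \<sigma> permutes Q" using rho_i0 by (auto simp: r_def supp_def)
  define sl where "sl = map (mk1 i0 Q s) w"
  have V0: "V i0 r s sl \<noteq> 0"
  proof -
    have "V i0 r s sl = (\<Sum>\<sigma>\<in>supp r. sc (r \<sigma>) (wprod (map (s \<circ> rename_type i0 \<sigma>) w)))"
      unfolding V_def sl_def
    proof (intro sum.cong refl)
      fix \<sigma> assume "\<sigma> \<in> supp r"
      then have "\<sigma> permutes Q" using rp by blast
      show "sc (r \<sigma>) (wprod (map (sv s i0 \<sigma>) (map (mk1 i0 Q s) w))) = sc (r \<sigma>) (wprod (map (s \<circ> rename_type i0 \<sigma>) w))"
        unfolding map_sv_mk[OF \<open>\<sigma> permutes Q\<close>] ..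
    qed
    then show ?thesis using E by simp
  qed
  have ok: "\<forall>x\<in>set sl. okslot Q x"
  proof
    fix x assume "x \<in> set sl"
    then obtain v where v: "v \<in> set w" "x = mk1 i0 Q s v" unfolding sl_def by auto
    obtain a b where ab: "v = (a, b)" by (cases v)
    have "v \<in> vars_n n" using mw(2) v(1) by simp
    then have v2: "a \<in> {1..4}" unfolding vars_n_def ab by simp
    have "s (a, b) \<in> part a" using adm v2 by (simp add: adm_iff)
    then show "okslot Q x" using v(2) v2 ab by (simp add: mk1_def)
  qed
  have dq: "distinct (qvs sl)"
    unfolding sl_def qvs_mk distinct_map
  proof
    show "distinct (filter (\<lambda>v. fst v = i0 \<and> snd v \<in> Q) w)" using mw(1) by simp
    show "inj_on snd (set (filter (\<lambda>v. fst v = i0 \<and> snd v \<in> Q) w))"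
      unfolding inj_on_def set_filter mem_Collect_eq by (simp add: prod_eq_iff)
  qed
  have sq: "set (qvs sl) = Q"
  proof -
    have "set (qvs sl) = snd ` {v \<in> set w. fst v = i0 \<and> snd v \<in> Q}"
      unfolding sl_def qvs_mk set_map set_filter ..
    also have "\<dots> = Q"
    proof
      show "snd ` {v \<in> set w. fst v = i0 \<and> snd v \<in> Q} \<subseteq> Q" by blast
      show "Q \<subseteq> snd ` {v \<in> set w. fst v = i0 \<and> snd v \<in> Q}"
      proof
        fix q assume q: "q \<in> Q"
        then have "q \<in> {1..n i0}" using Q(1) by blast
        then have "(i0, q) \<in> vars_n n" using i0 unfolding vars_n_def by simp
        then have "(i0, q) \<in> set w" using mw(2) by simp
        then have mem: "(i0, q) \<in> {v \<in> set w. fst v = i0 \<and> snd v \<in> Q}" using q by simp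
        show "q \<in> snd ` {v \<in> set w. fst v = i0 \<and> snd v \<in> Q}"
          by (rule image_eqI[where x="(i0, q)"]) (simp, rule mem)
      qed
    qed
    finally show ?thesis .
  qed
  obtain sl' where sl': "\<forall>x\<in>set sl'. okslot Q x" "qvs sl' = qvs sl" "V i0 r s sl' \<noteq> 0" "noadj sl'"
    using reduce[OF ok V0] by blast
  have dq': "distinct (qvs sl')" and sq': "set (qvs sl') = Q" using sl'(2) dq sq by simp_all
  have lq: "length (qvs sl') = m^2" using distinct_card[OF dq'] sq' Q(2) by simp
  have len1: "length sl' \<le> 2 * m^2 + 1" using noadj_len[OF sl'(4)] lq by simp
  have len2: "m^2 \<le> length sl'" using qvs_len[of sl'] lq by simp
  obtain t S w' s' where fin: "t i0 \<ge> m^2" "(\<Sum>i\<in>{1..4}. t i) = length sl'" "S \<subseteq> {1..t i0} - Q"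
    "card S = t i0 - m^2"
    "multilinear_in ({(j, k). j \<in> {1..4} \<and> j \<noteq> i0 \<and> k \<in> {1..t j}} \<union> {(i0, k) | k. k \<in> Q \<union> S}) w'"
    "admissible_subst G sh s'" "(\<Sum>\<sigma>\<in>supp r. sc (r \<sigma>) (wprod (map (s' \<circ> rename_type i0 \<sigma>) w'))) \<noteq> 0"
    using finalize[OF sl'(1) dq' sq' Q(1) Q(2) i0 sl'(3) adm rp] by blast
  have T: "tensor_act (\<lambda>j. if j = i0 then \<rho> i0 else galg_unit) (monom_poly w') = act_type i0 r (monom_poly w')"
  proof -
    consider "i0 = 1" | "i0 = 2" | "i0 = 3" | "i0 = 4" using four[OF i0] by blast
    then show ?thesis by cases (simp_all add: tensor_act_def act_unit r_def)
  qed
  have "eval_poly sc (tensor_act (\<lambda>j. if j = i0 then \<rho> i0 else galg_unit) (monom_poly w')) s' =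
      (\<Sum>\<sigma>\<in>supp r. sc (r \<sigma>) (wprod (map (s' \<circ> rename_type i0 \<sigma>) w')))"
    unfolding T by (simp add: eval_act[OF m gr finite_supp_monom] eval_monom[OF m])
  then have "\<not> vanishes_in sc G sh (tensor_act (\<lambda>j. if j = i0 then \<rho> i0 else galg_unit) (monom_poly w'))"
    using fin(6,7) by (auto simp: vanishes_in_def)
  moreover have "m^2 \<le> (\<Sum>i\<in>{1..4}. t i)" "(\<Sum>i\<in>{1..4}. t i) \<le> 2 * m^2 + 1"
    using fin(2) len1 len2 by simp_all
  ultimately show ?thesis using fin(1,3,4,5) by blast
qed

end
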